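(* Let $U_1,\dots,U_n$ be subsets of a set $X$, $\mathcal C=\mathrm{code}(\mathcal U,X)\subseteq2^{[n]}$, and $I_{\Gamma(\mathcal C)}$ the Stanley–Reisner ideal of the polar complex of $\mathcal C$. Then for $\sigma,\tau\subseteq[n]$, $$x^\sigma y^\tau\in I_{\Gamma(\mathcal C)}\iff\bigcap_{i\in\sigma}U_i\subseteq\bigcup_{j\in\tau}U_j,$$ with the conventions $\bigcap_{i\in\emptyset}U_i=X$ and $\bigcup_{j\in\emptyset}U_j=\emptyset$.
   Context: For $\sigma\subseteq[n]$ the atom is $A_\sigma=\bigl(\bigcap_{i\in\sigma}U_i\bigr)\setminus\bigcup_{j\notin\sigma}U_j$ (with $A_\emptyset=X\setminus\bigcup_iU_i$), and $\mathrm{code}(\mathcal U,X)=\{\sigma:A_\sigma\neq\emptyset\}$. The polar complex $\Gamma(\mathcal C)$ is the simplicial complex on $[n]\sqcup\{\bar1,\dots,\bar n\}$ consisting of all subsets of $\sigma\sqcup\{\bar i:i\in[n]\setminus\sigma\}$, $\sigma\in\mathcal C$. In $S=\mathbb F_2[x_1,\dots,x_n,y_1,\dots,y_n]$, with $x^\sigma=\prod_{i\in\sigma}x_i$ and $y^\tau=\prod_{j\in\tau}y_j$, the Stanley–Reisner ideal is $I_{\Gamma(\mathcal C)}=\langle x^\sigma y^\tau:\sigma\sqcup\{\bar j:j\in\tau\}\notin\Gamma(\mathcal C)\rangle$. *)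

theory Defs
  imports "HOL-Library.Poly_Mapping" "HOL-Library.Z2"
begin

definition atom :: "nat \<Rightarrow> (nat \<Rightarrow> 'a set) \<Rightarrow> 'a set \<Rightarrow> nat set \<Rightarrow> 'a set" where
  "atom n U X \<sigma> = {p \<in> X. (\<forall>i\<in>\<sigma>. p \<in> U i) \<and> (\<forall>j\<in>{1..n} - \<sigma>. p \<notin> U j)}"

definition code :: "nat \<Rightarrow> (nat \<Rightarrow> 'a set) \<Rightarrow> 'a set \<Rightarrow> nat set set" where
  "code n U X = {\<sigma>. \<sigma> \<subseteq> {1..n} \<and> atom n U X \<sigma> \<noteq> {}}"

text \<open>Vertices of the polar complex: Inl i stands for i, Inr i for bar i.\<close>
definition polar_complex :: "nat \<Rightarrow> nat set set \<Rightarrow> (nat + nat) set set" where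
  "polar_complex n C = {F. \<exists>\<sigma>\<in>C. F \<subseteq> Inl ` \<sigma> \<union> Inr ` ({1..n} - \<sigma>)}"

text \<open>Polynomial ring over F_2 in variables x_i (Inl i) and y_j (Inr j).\<close>
type_synonym poly2 = "((nat + nat) \<Rightarrow>\<^sub>0 nat) \<Rightarrow>\<^sub>0 bit"

definition var :: "nat + nat \<Rightarrow> poly2" where
  "var v = Poly_Mapping.single (Poly_Mapping.single v 1) 1"

definition xy_mono :: "nat set \<Rightarrow> nat set \<Rightarrow> poly2" where
  "xy_mono \<sigma> \<tau> = (\<Prod>i\<in>\<sigma>. var (Inl i)) * (\<Prod>j\<in>\<tau>. var (Inr j))"

definition ideal_gen :: "poly2 set \<Rightarrow> poly2 set" where
  "ideal_gen G = {p. \<exists>F c. finite F \<and> F \<subseteq> G \<and> p = (\<Sum>g\<in>F. c g * g)}"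

definition SR_ideal :: "nat \<Rightarrow> (nat + nat) set set \<Rightarrow> poly2 set" where
  "SR_ideal n \<Gamma> = ideal_gen {xy_mono \<sigma> \<tau> | \<sigma> \<tau>. \<sigma> \<subseteq> {1..n} \<and> \<tau> \<subseteq> {1..n}
                                 \<and> Inl ` \<sigma> \<union> Inr ` \<tau> \<notin> \<Gamma>}"

definition big_inter :: "'a set \<Rightarrow> (nat \<Rightarrow> 'a set) \<Rightarrow> nat set \<Rightarrow> 'a set" where
  "big_inter X U \<sigma> = (if \<sigma> = {} then X else (\<Inter>i\<in>\<sigma>. U i))"

definition big_union :: "(nat \<Rightarrow> 'a set) \<Rightarrow> nat set \<Rightarrow> 'a set" where
  "big_union U \<tau> = (\<Union>j\<in>\<tau>. U j)"

end

theory Submission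
  imports Defs
begin

definition expo :: "nat set \<Rightarrow> nat set \<Rightarrow> (nat + nat) \<Rightarrow>\<^sub>0 nat" where
  "expo \<sigma> \<tau> = (\<Sum>i\<in>\<sigma>. Poly_Mapping.single (Inl i) 1) + (\<Sum>j\<in>\<tau>. Poly_Mapping.single (Inr j) 1)"

lemma prod_single:
  assumes "finite A"
  shows "(\<Prod>i\<in>A. Poly_Mapping.single (f i) (1::bit)) = Poly_Mapping.single (\<Sum>i\<in>A. f i) 1"
  using assms by (induction A rule: finite_induct) (auto simp: mult_single)

lemma xy_mono_single:
  assumes "finite \<sigma>" "finite \<tau>"
  shows "xy_mono \<sigma> \<tau> = Poly_Mapping.single (expo \<sigma> \<tau>) 1"
  unfolding xy_mono_def var_def expo_def
  using assms by (simp add: prod_single mult_single)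

lemma lookup_sum_single:
  assumes "finite A"
  shows "Poly_Mapping.lookup (\<Sum>i\<in>A. Poly_Mapping.single (f i) (1::nat)) v \<noteq> 0 \<longleftrightarrow> v \<in> f ` A"
  using assms by (induction A rule: finite_induct) (auto simp: lookup_add lookup_single when_def)

lemma lookup_ex:
  assumes "finite \<sigma>" "finite \<tau>"
  shows "Poly_Mapping.lookup (expo \<sigma> \<tau>) v \<noteq> 0 \<longleftrightarrow> v \<in> Inl ` \<sigma> \<union> Inr ` \<tau>"
  using lookup_sum_single[OF assms(1), of Inl v] lookup_sum_single[OF assms(2), of Inr v]
  unfolding expo_def lookup_add by auto

lemma face_iff:
  assumes U: "\<forall>i\<in>{1..n}. U i \<subseteq> X"
    and s: "\<sigma> \<subseteq> {1..n}" and t: "\<tau> \<subseteq> {1..n}"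
  shows "Inl ` \<sigma> \<union> Inr ` \<tau> \<in> polar_complex n (code n U X)
         \<longleftrightarrow> \<not> big_inter X U \<sigma> \<subseteq> big_union U \<tau>"
proof
  assume "Inl ` \<sigma> \<union> Inr ` \<tau> \<in> polar_complex n (code n U X)"
  then obtain c where c: "c \<in> code n U X" and sub: "Inl ` \<sigma> \<union> Inr ` \<tau> \<subseteq> Inl ` c \<union> Inr ` ({1..n} - c)"
    unfolding polar_complex_def by blast
  have sc: "\<sigma> \<subseteq> c" using sub by auto
  have tc: "\<tau> \<subseteq> {1..n} - c" using sub by auto
  from c obtain p where p: "p \<in> atom n U X c" unfolding code_def by blast
  have "p \<in> big_inter X U \<sigma>" using p sc unfolding atom_def big_inter_def by auto
  moreover have "p \<notin> big_union U \<tau>" using p tc unfolding atom_def big_union_def by auto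
  ultimately show "\<not> big_inter X U \<sigma> \<subseteq> big_union U \<tau>" by blast
next
  assume "\<not> big_inter X U \<sigma> \<subseteq> big_union U \<tau>"
  then obtain p where p1: "p \<in> big_inter X U \<sigma>" and p2: "p \<notin> big_union U \<tau>" by blast
  have pX: "p \<in> X"
  proof (cases "\<sigma> = {}")
    case True then show ?thesis using p1 by (simp add: big_inter_def)
  next
    case False then obtain i where "i \<in> \<sigma>" by blast
    then show ?thesis using p1 s U False by (auto simp: big_inter_def)
  qed
  define c where "c = {i\<in>{1..n}. p \<in> U i}"
  have "p \<in> atom n U X c" using pX unfolding atom_def c_def by auto
  then have "c \<in> code n U X" unfolding code_def c_def by auto
  moreover have "\<sigma> \<subseteq> c" using p1 s unfolding c_def big_inter_def by (auto split: if_splits)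
  moreover have "\<tau> \<subseteq> {1..n} - c" using p2 t unfolding c_def big_union_def by auto
  ultimately show "Inl ` \<sigma> \<union> Inr ` \<tau> \<in> polar_complex n (code n U X)"
    unfolding polar_complex_def by blast
qed

theorem corollary6p8:
  fixes n :: nat and X :: "'a set" and U :: "nat \<Rightarrow> 'a set" and \<sigma> \<tau> :: "nat set"
  assumes "\<forall>i\<in>{1..n}. U i \<subseteq> X"
    and "\<sigma> \<subseteq> {1..n}" and "\<tau> \<subseteq> {1..n}"
  shows "xy_mono \<sigma> \<tau> \<in> SR_ideal n (polar_complex n (code n U X))
         \<longleftrightarrow> big_inter X U \<sigma> \<subseteq> big_union U \<tau>"
proof
  assume mem: "xy_mono \<sigma> \<tau> \<in> SR_ideal n (polar_complex n (code n U X))"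
  show "big_inter X U \<sigma> \<subseteq> big_union U \<tau>"
  proof (rule ccontr)
    assume "\<not> big_inter X U \<sigma> \<subseteq> big_union U \<tau>"
    then have face: "Inl ` \<sigma> \<union> Inr ` \<tau> \<in> polar_complex n (code n U X)"
      using face_iff[OF assms] by blast
    have fs: "finite \<sigma>" "finite \<tau>" using assms(2,3) finite_subset[OF _ finite_atLeastAtMost] by auto
    from mem obtain F c where F: "finite F" "F \<subseteq> {xy_mono \<sigma>' \<tau>' | \<sigma>' \<tau>'. \<sigma>' \<subseteq> {1..n} \<and> \<tau>' \<subseteq> {1..n}
                                 \<and> Inl ` \<sigma>' \<union> Inr ` \<tau>' \<notin> polar_complex n (code n U X)}"
      and eq: "xy_mono \<sigma> \<tau> = (\<Sum>g\<in>F. c g * g)"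
      using mem unfolding SR_ideal_def ideal_gen_def mem_Collect_eq by (elim exE conjE) (rule that; assumption)
    have "expo \<sigma> \<tau> \<in> Poly_Mapping.keys (xy_mono \<sigma> \<tau>)" using fs by (simp add: xy_mono_single)
    then have "expo \<sigma> \<tau> \<in> Poly_Mapping.keys (\<Sum>g\<in>F. c g * g)" unfolding eq[symmetric] .
    then have "expo \<sigma> \<tau> \<in> (\<Union>g\<in>F. Poly_Mapping.keys (c g * g))"
      by (rule subsetD[OF keys_sum])
    then obtain g where gF: "g \<in> F" and kg: "expo \<sigma> \<tau> \<in> Poly_Mapping.keys (c g * g)"
      by (rule UN_E)
    from gF F obtain \<sigma>' \<tau>' where g: "g = xy_mono \<sigma>' \<tau>'" and s': "\<sigma>' \<subseteq> {1..n}" "\<tau>' \<subseteq> {1..n}"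
      and nf: "Inl ` \<sigma>' \<union> Inr ` \<tau>' \<notin> polar_complex n (code n U X)"
    proof -
      have "g \<in> {xy_mono \<sigma>' \<tau>' | \<sigma>' \<tau>'. \<sigma>' \<subseteq> {1..n} \<and> \<tau>' \<subseteq> {1..n}
                                 \<and> Inl ` \<sigma>' \<union> Inr ` \<tau>' \<notin> polar_complex n (code n U X)}"
        using gF F(2) by (rule subsetD[rotated])
      then show ?thesis using that by blast
    qed
    have fs': "finite \<sigma>'" "finite \<tau>'" using s' finite_subset[OF _ finite_atLeastAtMost] by auto
    from kg keys_mult[of "c g" g] obtain a b where ab: "expo \<sigma> \<tau> = a + b" "b \<in> Poly_Mapping.keys g" by blast
    then have b: "b = expo \<sigma>' \<tau>'" using g fs' by (simp add: xy_mono_single)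
    have "Inl ` \<sigma>' \<union> Inr ` \<tau>' \<subseteq> Inl ` \<sigma> \<union> Inr ` \<tau>"
    proof
      fix v assume "v \<in> Inl ` \<sigma>' \<union> Inr ` \<tau>'"
      then have "Poly_Mapping.lookup b v \<noteq> 0" using lookup_ex[OF fs', of v] b by simp
      then have "Poly_Mapping.lookup (expo \<sigma> \<tau>) v \<noteq> 0" using ab(1) by (simp add: lookup_add)
      then show "v \<in> Inl ` \<sigma> \<union> Inr ` \<tau>" using lookup_ex[OF fs, of v] by simp
    qed
    then have "Inl ` \<sigma>' \<union> Inr ` \<tau>' \<in> polar_complex n (code n U X)"
    proof -
      from face obtain c where "c \<in> code n U X" "Inl ` \<sigma> \<union> Inr ` \<tau> \<subseteq> Inl ` c \<union> Inr ` ({1..n} - c)"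
        unfolding polar_complex_def by blast
      then show ?thesis unfolding polar_complex_def mem_Collect_eq
        using subset_trans[OF \<open>Inl ` \<sigma>' \<union> Inr ` \<tau>' \<subseteq> Inl ` \<sigma> \<union> Inr ` \<tau>\<close>] by (intro bexI)
    qed
    then show False using nf by blast
  qed
next
  assume "big_inter X U \<sigma> \<subseteq> big_union U \<tau>"
  then have nf: "Inl ` \<sigma> \<union> Inr ` \<tau> \<notin> polar_complex n (code n U X)"
    using face_iff assms by blast
  show "xy_mono \<sigma> \<tau> \<in> SR_ideal n (polar_complex n (code n U X))"
    unfolding SR_ideal_def ideal_gen_def
  proof (rule CollectI, intro exI conjI)
    show "finite {xy_mono \<sigma> \<tau>}" by simp
    show "{xy_mono \<sigma> \<tau>} \<subseteq> {xy_mono \<sigma>' \<tau>' | \<sigma>' \<tau>'. \<sigma>' \<subseteq> {1..n} \<and> \<tau>' \<subseteq> {1..n}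
                                 \<and> Inl ` \<sigma>' \<union> Inr ` \<tau>' \<notin> polar_complex n (code n U X)}"
      using nf assms(2,3) by blast
    show "xy_mono \<sigma> \<tau> = (\<Sum>g\<in>{xy_mono \<sigma> \<tau>}. (\<lambda>_. 1) g * g)" by simp
  qed
qed

end
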